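(* Let $N\ge1$, $\frac{(N-2)_+}{N}<m<1$, $q=m+\frac2N$. There exists $A_{sub}>0$ depending only on $N$ and $m$ such that: (i) if $m\in[\frac{N-1}{N},1)$, then for every $A\ge A_{sub}$ the function $w_A(s,y):=\sigma_A(y)$ satisfies $\partial_s w_A-\mathcal{L}w_A\le0$ in $(0,\infty)\times\mathbb{R}^N$; (ii) if $m\in(\frac{(N-2)_+}{N},\frac{N-1}{N})$, then for every $A\ge A_{sub}$ the function $$w_A(s,y):=\sigma_A(y)\Big(1-\frac{\gamma}{s}\Big),\qquad \gamma:=\frac{1}{2(1-m)},$$ satisfies $\partial_s w_A-\mathcal{L}w_A\le0$ in $(s_0,\infty)\times\mathbb{R}^N$, where $s_0:=\max\{\frac{4q}{1-m},\frac{2^{m+2}q}{q-1}\}$.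
   Context: $\sigma_A(y):=(A+B_0|y|^2)^{1/(m-1)}$ for $A>0$, with $B_0:=\frac{1-m}{2m(mN-N+2)}$. The nonlinear operator $\mathcal{L}$ acts on positive functions $z(s,y)$ by $$\mathcal{L}z:=\Delta z^m+\frac{1}{N(q-1)}(Nz+y\cdot\nabla z)+\frac{1}{(q-1)s}\Big(z+\frac{1-m}{2}y\cdot\nabla z\Big)-\frac{z^q}{s},$$ with $q=m+2/N$. *)

theory Defs
  imports "HOL-Analysis.Analysis"
begin

text \<open>Spatial dimension N is DIM('a) for the Euclidean space 'a (i.e. R^N).\<close>

definition qexp :: "real \<Rightarrow> real \<Rightarrow> real" where
  "qexp m N = m + 2 / N"

definition B0 :: "real \<Rightarrow> real \<Rightarrow> real" where
  "B0 m N = (1 - m) / (2 * m * (m * N - N + 2))"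

definition sigmaA :: "real \<Rightarrow> real \<Rightarrow> real \<Rightarrow> 'a::euclidean_space \<Rightarrow> real" where
  "sigmaA m N A y = (A + B0 m N * (norm y)\<^sup>2) powr (1 / (m - 1))"

definition pderiv_dir :: "('a::euclidean_space \<Rightarrow> real) \<Rightarrow> 'a \<Rightarrow> 'a \<Rightarrow> real" where
  "pderiv_dir f i y = deriv (\<lambda>t. f (y + t *\<^sub>R i)) 0"

definition laplacian :: "('a::euclidean_space \<Rightarrow> real) \<Rightarrow> 'a \<Rightarrow> real" where
  "laplacian f y = (\<Sum>i\<in>Basis. pderiv_dir (pderiv_dir f i) i y)"

definition y_grad :: "('a::euclidean_space \<Rightarrow> real) \<Rightarrow> 'a \<Rightarrow> real" where
  "y_grad f y = (\<Sum>i\<in>Basis. (y \<bullet> i) * pderiv_dir f i y)"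

definition Lop :: "real \<Rightarrow> (real \<Rightarrow> 'a::euclidean_space \<Rightarrow> real) \<Rightarrow> real \<Rightarrow> 'a \<Rightarrow> real" where
  "Lop m z s y =
     (let N = real DIM('a); q = qexp m N in
      laplacian (\<lambda>x. (z s x) powr m) y
      + 1 / (N * (q - 1)) * (N * z s y + y_grad (z s) y)
      + 1 / ((q - 1) * s) * (z s y + (1 - m) / 2 * y_grad (z s) y)
      - (z s y) powr q / s)"

definition dt :: "(real \<Rightarrow> 'a \<Rightarrow> real) \<Rightarrow> real \<Rightarrow> 'a \<Rightarrow> real" where
  "dt z s y = deriv (\<lambda>r. z r y) s"

end

theory Submission
  imports Defs
begin


lemma nsq_deriv:
  fixes y i :: "'a::euclidean_space"
  shows "((\<lambda>t. (norm (y + t *\<^sub>R i))\<^sup>2) has_real_derivative (2*(y \<bullet> i) + 2*t*(i \<bullet> i))) (at t)"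
proof -
  have eq: "(\<lambda>t. (norm (y + t *\<^sub>R i))\<^sup>2) = (\<lambda>t. (norm y)\<^sup>2 + 2*t*(y \<bullet> i) + t\<^sup>2*(i \<bullet> i))"
    by (rule ext) (simp only: power2_norm_eq_inner, simp add: inner_add_left inner_add_right inner_commute algebra_simps power2_eq_square)
  show ?thesis unfolding eq
    by (auto intro!: derivative_eq_intros simp: algebra_simps)
qed

lemma pd1:
  fixes y i :: "'a::euclidean_space"
  assumes "A > 0" "B \<ge> 0"
  shows "pderiv_dir (\<lambda>x. K * (A + B*(norm x)\<^sup>2) powr e) i y
       = K * (e * (A + B*(norm y)\<^sup>2) powr (e-1) * (2*B*(y \<bullet> i)))"
  unfolding pderiv_dir_def
proof (rule DERIV_imp_deriv)
  have pos: "A + B*(norm (y + 0 *\<^sub>R i))\<^sup>2 > 0" using assms by (simp add: add_pos_nonneg)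
  have "((\<lambda>t. A + B*(norm (y + t *\<^sub>R i))\<^sup>2) has_real_derivative (B*(2*(y \<bullet> i) + 2*0*(i \<bullet> i)))) (at 0)"
    using DERIV_add[OF DERIV_const DERIV_cmult[OF nsq_deriv], of A B y i 0] by simp
  from DERIV_fun_powr[OF this pos, of e]
  have "((\<lambda>t. (A + B*(norm (y + t *\<^sub>R i))\<^sup>2) powr e) has_real_derivative
     e * (A + B*(norm y)\<^sup>2) powr (e-1) * (2*B*(y \<bullet> i))) (at 0)" by (simp add: algebra_simps)
  from DERIV_cmult[OF this, of K]
  show "((\<lambda>t. K * (A + B*(norm (y + t *\<^sub>R i))\<^sup>2) powr e) has_real_derivative
     K * (e * (A + B*(norm y)\<^sup>2) powr (e-1) * (2*B*(y \<bullet> i)))) (at 0)" by simp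
qed

lemma pd2:
  fixes y i :: "'a::euclidean_space"
  assumes "A > 0" "B \<ge> 0" "i \<in> Basis"
  shows "pderiv_dir (\<lambda>x. K * (A + B*(norm x)\<^sup>2) powr e * (x \<bullet> i)) i y
       = K * (e * (A + B*(norm y)\<^sup>2) powr (e-1) * (2*B*(y \<bullet> i)) * (y \<bullet> i) + (A + B*(norm y)\<^sup>2) powr e)"
  unfolding pderiv_dir_def
proof (rule DERIV_imp_deriv)
  have pos: "A + B*(norm (y + 0 *\<^sub>R i))\<^sup>2 > 0" using assms by (simp add: add_pos_nonneg)
  have "((\<lambda>t. A + B*(norm (y + t *\<^sub>R i))\<^sup>2) has_real_derivative (B*(2*(y \<bullet> i) + 2*0*(i \<bullet> i)))) (at 0)"
    using DERIV_add[OF DERIV_const DERIV_cmult[OF nsq_deriv], of A B y i 0] by simp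
  from DERIV_fun_powr[OF this pos, of e]
  have d1: "((\<lambda>t. (A + B*(norm (y + t *\<^sub>R i))\<^sup>2) powr e) has_real_derivative
     e * (A + B*(norm y)\<^sup>2) powr (e-1) * (2*B*(y \<bullet> i))) (at 0)" by (simp add: algebra_simps)
  have d2: "((\<lambda>t. (y + t *\<^sub>R i) \<bullet> i) has_real_derivative 1) (at 0)"
  proof -
    have "(\<lambda>t. (y + t *\<^sub>R i) \<bullet> i) = (\<lambda>t. y \<bullet> i + t)" using assms(3) by (simp add: inner_add_left)
    then show ?thesis by (auto intro!: derivative_eq_intros)
  qed
  from DERIV_cmult[OF DERIV_mult[OF d1 d2], of K]
  show "((\<lambda>t. K * (A + B*(norm (y + t *\<^sub>R i))\<^sup>2) powr e * ((y + t *\<^sub>R i) \<bullet> i)) has_real_derivative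
     K * (e * (A + B*(norm y)\<^sup>2) powr (e-1) * (2*B*(y \<bullet> i)) * (y \<bullet> i) + (A + B*(norm y)\<^sup>2) powr e)) (at 0)"
    by (simp add: algebra_simps)
qed

lemma sum_sq: "(\<Sum>i\<in>Basis. (y \<bullet> i) * (y \<bullet> i)) = (norm (y::'a::euclidean_space))\<^sup>2"
  by (simp add: power2_norm_eq_inner euclidean_inner[of y y])

lemma lap:
  fixes y :: "'a::euclidean_space"
  assumes "A > 0" "B \<ge> 0"
  shows "laplacian (\<lambda>x. K * (A + B*(norm x)\<^sup>2) powr e) y
     = K*e*2*B*((e-1)*(A + B*(norm y)\<^sup>2) powr (e-1-1)*(2*B)*(norm y)\<^sup>2
                 + real DIM('a) * (A + B*(norm y)\<^sup>2) powr (e-1))"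
proof -
  have "\<And>i. i \<in> Basis \<Longrightarrow> pderiv_dir (pderiv_dir (\<lambda>x. K * (A + B*(norm x)\<^sup>2) powr e) i) i y
     = (K*e*2*B) * ((e-1) * (A + B*(norm y)\<^sup>2) powr (e-1-1) * (2*B*(y \<bullet> i)) * (y \<bullet> i) + (A + B*(norm y)\<^sup>2) powr (e-1))"
  proof -
    fix i :: 'a assume i: "i \<in> Basis"
    have "pderiv_dir (\<lambda>x. K * (A + B*(norm x)\<^sup>2) powr e) i = (\<lambda>x. (K*e*2*B) * (A + B*(norm x)\<^sup>2) powr (e-1) * (x \<bullet> i))"
      by (rule ext) (simp add: pd1[OF assms] algebra_simps)
    then show "?thesis i" using pd2[OF assms i] by simp
  qed
  then have "laplacian (\<lambda>x. K * (A + B*(norm x)\<^sup>2) powr e) y = (\<Sum>i\<in>Basis. (K*e*2*B) * ((e-1) * (A + B*(norm y)\<^sup>2) powr (e-1-1) * (2*B) * ((y \<bullet> i) * (y \<bullet> i)) + (A + B*(norm y)\<^sup>2) powr (e-1)))"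
    unfolding laplacian_def by (intro sum.cong) (auto simp: algebra_simps)
  also have "\<dots> = (K*e*2*B) * ((e-1) * (A + B*(norm y)\<^sup>2) powr (e-1-1) * (2*B) * (\<Sum>i\<in>Basis. (y \<bullet> i) * (y \<bullet> i)) + real DIM('a) * (A + B*(norm y)\<^sup>2) powr (e-1))"
    by (simp add: sum_distrib_left[symmetric] sum.distrib sum_distrib_right[symmetric] distrib_left)
  finally show ?thesis by (simp add: sum_sq)
qed

lemma ygr:
  fixes y :: "'a::euclidean_space"
  assumes "A > 0" "B \<ge> 0"
  shows "y_grad (\<lambda>x. K * (A + B*(norm x)\<^sup>2) powr e) y
     = K*e*(A + B*(norm y)\<^sup>2) powr (e-1)*(2*B)*(norm y)\<^sup>2"
proof -
  have "y_grad (\<lambda>x. K * (A + B*(norm x)\<^sup>2) powr e) y = (\<Sum>i\<in>Basis. (K*e*(A + B*(norm y)\<^sup>2) powr (e-1)*(2*B)) * ((y \<bullet> i) * (y \<bullet> i)))"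
    unfolding y_grad_def by (intro sum.cong) (auto simp: pd1[OF assms] algebra_simps)
  also have "\<dots> = K*e*(A + B*(norm y)\<^sup>2) powr (e-1)*(2*B)*(norm y)\<^sup>2"
    by (simp add: sum_distrib_left[symmetric] sum_sq)
  finally show ?thesis .
qed

lemma alg0:
  fixes m N A r2 a f fm fq t Upq B p k g D U c h :: real
  assumes "D = m*N - N + 2" "B*(2*m*D) = 1-m" "p*(m-1) = 1" "c*D = 1" "k = c*N" "g*(2*(1-m)) = 1" "U = A + B*r2" "2*h = 1-m"
  shows "fm*(p+1)*2*B*((p+1-1)*a*(2*B)*r2 + N*(a*U))
         + c*(N*(f*(a*U)) + f*p*a*(2*B)*r2)
         + k*t*(f*(a*U) + h*(f*p*a*(2*B)*r2))
         - Upq*fq*t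
       = a*(B*r2*(2*g*(fm-f)) + A*(k*f*t - k*(fm-f))) - Upq*fq*t"
  using assms by algebra

lemma LOPeval:
  fixes m A s :: real and F :: "real \<Rightarrow> real" and y :: "'a::euclidean_space"
  defines "N \<equiv> real DIM('a)"
  assumes m0: "0 < m" and m1: "m < 1" and D0: "m*N - N + 2 > 0" and A0: "A > 0" and F0: "F s > 0" and s0: "s \<noteq> 0"
  shows "Lop m (\<lambda>r x. sigmaA m N A x * F r) s y
     = ((A + B0 m N*(norm y)\<^sup>2) powr (1/(m-1)-1)) *
         (B0 m N*(norm y)\<^sup>2*(2*(1/(2*(1-m)))*(F s powr m - F s))
          + A*((1/(qexp m N - 1))*F s*(1/s) - (1/(qexp m N - 1))*(F s powr m - F s)))
       - (A + B0 m N*(norm y)\<^sup>2) powr (1/(m-1)*qexp m N) * F s powr (qexp m N) * (1/s)"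
proof -
  define B where "B = B0 m N"
  define p where "p = 1/(m-1)"
  define q where "q = qexp m N"
  define f where "f = F s"
  define U where "U = A + B*(norm y)\<^sup>2"
  define a where "a = U powr (p-1)"
  define r2 where "r2 = (norm y)\<^sup>2"
  define D where "D = m*N - N + 2"
  have N0: "N > 0" unfolding N_def by simp
  have B0pos: "B > 0" unfolding B_def B0_def using m0 m1 D0 by (simp add: divide_pos_pos)
  have U0: "U > 0" unfolding U_def using A0 B0pos by (simp add: add_pos_nonneg)
  have qD: "N*(q-1) = D" unfolding q_def qexp_def D_def using N0 by (simp add: field_simps)
  have pm: "p*m = p+1" unfolding p_def using m1 by (simp add: field_simps)
  have pm2: "m*p = p+1" using pm by (simp add: mult.commute)
  have Up: "U powr p = a*U"
  proof -
    have "U powr (p-1+1) = U powr (p-1) * U powr 1" by (rule powr_add)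
    then show ?thesis unfolding a_def using U0 by simp
  qed
  have zs: "(\<lambda>x::'a. sigmaA m N A x * F s) = (\<lambda>x. f * (A + B*(norm x)\<^sup>2) powr p)"
    by (rule ext) (simp add: sigmaA_def B_def p_def f_def)
  have zm: "(\<lambda>x::'a. (sigmaA m N A x * F s) powr m) = (\<lambda>x. f powr m * (A + B*(norm x)\<^sup>2) powr (p+1))"
  proof (rule ext)
    fix x :: 'a
    have "A + B*(norm x)\<^sup>2 > 0" using A0 B0pos by (simp add: add_pos_nonneg)
    then show "(sigmaA m N A x * F s) powr m = f powr m * (A + B*(norm x)\<^sup>2) powr (p+1)"
      using F0 by (simp add: sigmaA_def B_def p_def[symmetric] f_def powr_mult powr_powr pm2 mult.commute)
  qed
  have lapl: "laplacian (\<lambda>x. ((\<lambda>r x. sigmaA m N A x * F r) s x) powr m) y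
      = f powr m*(p+1)*2*B*((p+1-1)*a*(2*B)*r2 + N*(a*U))"
    using lap[OF A0 less_imp_le[OF B0pos], of "f powr m" "p+1" y] zm
    by (simp add: a_def U_def r2_def N_def Up[unfolded U_def])
  have yg: "y_grad ((\<lambda>r x. sigmaA m N A x * F r) s) y = f*p*a*(2*B)*r2"
    using ygr[OF A0 less_imp_le[OF B0pos], of f p y] zs
    by (simp add: a_def U_def r2_def)
  have zy: "sigmaA m N A y * F s = f*(a*U)"
    using zs Up by (simp add: fun_eq_iff U_def) 
  have zq: "(sigmaA m N A y * F s) powr q = U powr (p*q) * f powr q"
    using zs U0 F0 by (simp add: fun_eq_iff U_def f_def powr_mult powr_powr)
  have "Lop m (\<lambda>r x. sigmaA m N A x * F r) s y
     = f powr m*(p+1)*2*B*((p+1-1)*a*(2*B)*r2 + N*(a*U))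
         + (1/(N*(q-1)))*(N*(f*(a*U)) + f*p*a*(2*B)*r2)
         + (1/(q-1))*(1/s)*(f*(a*U) + ((1-m)/2)*(f*p*a*(2*B)*r2))
         - U powr (p*q)*f powr q*(1/s)"
    unfolding Lop_def Let_def N_def[symmetric] q_def[symmetric] lapl yg
    unfolding zq unfolding zy
    by (simp add: field_simps)
  also have "\<dots> = a*(B*r2*(2*(1/(2*(1-m)))*(f powr m-f)) + A*((1/(q-1))*f*(1/s) - (1/(q-1))*(f powr m-f))) - U powr (p*q)*f powr q*(1/s)"
  proof (rule alg0[where fm="f powr m" and fq="f powr q" and t="1/s" and Upq="U powr (p*q)" and k="1/(q-1)" and g="1/(2*(1-m))" and D=D and c="1/(N*(q-1))" and h="(1-m)/2"])
    show "D = m*N - N + 2" by (rule D_def)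
    show "B*(2*m*D) = 1-m" unfolding B_def B0_def D_def[symmetric] using m0 D0 D_def by (simp add: field_simps)
    show "p*(m-1) = 1" unfolding p_def using m1 by simp
    show "1/(N*(q-1))*D = 1" using qD D0 D_def by simp
    show "1/(q-1) = 1/(N*(q-1))*N" using N0 by simp
    show "1/(2*(1-m))*(2*(1-m)) = 1" using m1 by simp
    show "U = A + B*r2" unfolding U_def r2_def ..
    show "2*((1-m)/2) = 1-m" by simp
  qed
  finally show ?thesis by (simp add: a_def U_def B_def p_def q_def r2_def f_def)
qed



lemma fm_bounds:
  fixes f m :: real
  assumes f0: "0 < f" and f1: "f \<le> 1" and m0: "0 < m" and m1: "m < 1"
  shows "f powr m - f \<le> (1-m)*(1-f)" "f powr m - f \<ge> f*((1-m)*(1-f))"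
proof -
  have "f powr m * 1 powr (1-m) \<le> m*f + (1-m)*1"
    by (rule Youngs_inequality_0) (use assms in auto)
  then show "f powr m - f \<le> (1-m)*(1-f)" by (simp add: algebra_simps)
  have y2: "f powr (1-m) * 1 powr m \<le> (1-m)*f + m*1"
    by (rule Youngs_inequality_0) (use assms in auto)
  have "f = f powr m * f powr (1-m)" using f0 by (simp add: powr_add[symmetric])
  also have "\<dots> \<le> f powr m * ((1-m)*f + m)" using y2 by (intro mult_left_mono) auto
  finally have h: "f \<le> f powr m * ((1-m)*f + m)" .
  have "(1-m)*f \<le> (1-m)*1" using f1 m1 by (intro mult_left_mono) auto
  then have "(1-m)*f + m \<le> 1" by simp
  then have "f powr m * ((1-m)*f + m) \<le> f powr m * 1" by (intro mult_left_mono) auto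
  then have "f \<le> f powr m" using h by simp
  have "f powr m - f \<ge> f powr m * ((1-m)*(1-f))" using h by (simp add: algebra_simps)
  moreover have "f powr m * ((1-m)*(1-f)) \<ge> f * ((1-m)*(1-f))"
    using \<open>f \<le> f powr m\<close> f1 m1 by (intro mult_right_mono) auto
  ultimately show "f powr m - f \<ge> f*((1-m)*(1-f))" by linarith
qed

lemma final2:
  fixes a t g q k f fm X A U Ue fq c1 :: real
  assumes a0: "a > 0" and t0: "t > 0" and g0: "g \<ge> 1/2" and q1: "q > 1" and k: "k = 1/(q-1)"
    and gtq: "g*t*q \<le> 1/8" and f: "f = 1 - g*t" and lo: "fm - f \<ge> f*t/2" and hi: "fm - f \<le> t/2"
    and X0: "X \<ge> 0" and A0: "A > 0" and U: "U = A + X" and Ue: "Ue \<le> c1*U" and Ue0: "Ue \<ge> 0"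
    and fq0: "0 \<le> fq" and fq1: "fq \<le> 1" and c1a: "c1 \<le> 5/16" and c1b: "c1 \<le> 3*k/8"
  shows "a*U*g*t^2 - (a*(X*(2*g*(fm-f)) + A*(k*f*t - k*(fm-f))) - a*Ue*fq*t) \<le> 0"
proof -
  have k0: "k > 0" using q1 k by simp
  have gt0: "g*t > 0" using g0 t0 by simp
  have "g*t \<le> 1/(8*q)" using gtq q1 by (simp add: field_simps)
  have tg: "t*(1+g) \<le> 3/8"
  proof -
    have "g*t*1 \<le> g*t*q" using gt0 q1 by (intro mult_left_mono) auto
    then have "g*t \<le> 1/8" using gtq by simp
    moreover have "t \<le> 1/4"
    proof -
      have "(1/2)*t \<le> g*t" using g0 t0 by (intro mult_right_mono) auto
      then show ?thesis using \<open>g*t \<le> 1/8\<close> by linarith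
    qed
    ultimately show ?thesis by (simp add: algebra_simps)
  qed
  define P where "P = g*t^2 - 2*g*(fm-f)"
  define Q where "Q = g*t^2 - k*f*t + k*(fm-f)"
  have P: "P \<le> -(5/8)*g*t"
  proof -
    have "2*g*(fm-f) \<ge> 2*g*(f*t/2)" using lo g0 by (intro mult_left_mono) auto
    then have "P \<le> g*t*(t - f)" unfolding P_def by (simp add: algebra_simps power2_eq_square)
    moreover have "t - f \<le> -5/8" using tg f by (simp add: algebra_simps)
    moreover have "g*t*(t - f) \<le> g*t*(-5/8)" using \<open>t - f \<le> -5/8\<close> gt0 by (intro mult_left_mono) auto
    ultimately show ?thesis by (simp add: algebra_simps)
  qed
  have Q: "Q \<le> -(3/8)*k*t"
  proof -
    have "k*(fm-f) \<le> k*(t/2)" using hi k0 by (intro mult_left_mono) auto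
    then have "Q \<le> t*(g*t*(1+k) - k/2)" unfolding Q_def f by (simp add: algebra_simps power2_eq_square)
    moreover have "g*t*(1+k) \<le> k/8"
    proof -
      have "1 + k = q*k" using k q1 by (simp add: field_simps)
      then have "g*t*(1+k) = (g*t*q)*k" by simp
      also have "\<dots> \<le> (1/8)*k" using gtq k0 by (intro mult_right_mono) auto
      finally show ?thesis by simp
    qed
    then have "t*(g*t*(1+k) - k/2) \<le> t*(k/8 - k/2)" using t0 by (intro mult_left_mono) auto
    ultimately show ?thesis by (simp add: algebra_simps)
  qed
  have E: "a*U*g*t^2 - (a*(X*(2*g*(fm-f)) + A*(k*f*t - k*(fm-f))) - a*Ue*fq*t) = a*(X*P + A*Q + Ue*fq*t)"
    unfolding P_def Q_def U by (simp add: algebra_simps)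
  have "X*P \<le> X*(-(5/8)*g*t)" using P X0 by (intro mult_left_mono) auto
  moreover have "A*Q \<le> A*(-(3/8)*k*t)" using Q A0 by (intro mult_left_mono) auto
  moreover have "Ue*fq*t \<le> c1*U*t"
  proof -
    have "Ue*fq \<le> Ue" using Ue0 fq1 by (simp add: mult_left_le)
    also have "\<dots> \<le> c1*U" by (rule Ue)
    finally show ?thesis using t0 by (intro mult_right_mono) auto
  qed
  moreover have "X*(-(5/8)*g*t) + A*(-(3/8)*k*t) + c1*U*t \<le> 0"
  proof -
    have "c1*X \<le> (5/8*g)*X" using c1a g0 X0 by (intro mult_right_mono) auto
    moreover have "c1*A \<le> (3*k/8)*A" using c1b A0 by (intro mult_right_mono) auto
    ultimately have "c1*X + c1*A - (5/8*g)*X - (3*k/8)*A \<le> 0" by linarith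
    then have "t*(c1*X + c1*A - (5/8*g)*X - (3*k/8)*A) \<le> 0"
      using t0 by (intro mult_nonneg_nonpos) auto
    then show ?thesis unfolding U by (simp add: algebra_simps)
  qed
  ultimately have "X*P + A*Q + Ue*fq*t \<le> 0" by linarith
  then show ?thesis unfolding E using a0 by (simp add: mult_nonneg_nonpos)
qed

lemma dt_eval:
  fixes c g s :: real
  assumes "s \<noteq> 0"
  shows "deriv (\<lambda>r. c * (1 - g/r)) s = c*(g/s^2)"
proof (rule DERIV_imp_deriv)
  show "((\<lambda>r. c * (1 - g/r)) has_real_derivative c*(g/s^2)) (at s)"
    using assms by (auto intro!: derivative_eq_intros simp: power2_eq_square field_simps)
qed

theorem lemma3p1:
  fixes m :: real
  defines "N \<equiv> real DIM('a::euclidean_space)"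
  assumes "max 0 (N - 2) / N < m" and "m < 1"
  shows "\<exists>Asub>0.
     ((N - 1) / N \<le> m \<longrightarrow>
        (\<forall>A\<ge>Asub. \<forall>s>0. \<forall>y::'a.
           (let w = (\<lambda>(r::real) (x::'a). sigmaA m N A x) in dt w s y - Lop m w s y \<le> 0)))
   \<and> (m < (N - 1) / N \<longrightarrow>
        (\<forall>A\<ge>Asub. \<forall>s. \<forall>y::'a.
           (let q = qexp m N; \<gamma> = 1 / (2 * (1 - m));
                s0 = max (4 * q / (1 - m)) (2 powr (m + 2) * q / (q - 1));
                w = (\<lambda>(r::real) (x::'a). sigmaA m N A x * (1 - \<gamma> / r))
            in s0 < s \<longrightarrow> dt w s y - Lop m w s y \<le> 0)))"
proof -
  have N1: "N \<ge> 1" unfolding N_def using DIM_positive[where 'a='a] by linarith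
  have N0: "N > 0" using N1 by simp
  have m1: "m < 1" by (rule assms(3))
  have mx: "(N-2)/N \<le> max 0 (N-2)/N" using N0 by (intro divide_right_mono) auto
  have "0 \<le> max 0 (N-2)/N" using N0 by simp
  then have m0: "0 < m" using assms(2) by linarith
  have "(N-2)/N < m" using mx assms(2) by linarith
  then have "N - 2 < m*N" using N0 by (simp add: divide_less_eq)
  then have D0: "m*N - N + 2 > 0" by simp
  define q where "q = qexp m N"
  define B where "B = B0 m N"
  define p where "p = 1/(m-1)"
  define k where "k = 1/(q-1)"
  define g where "g = 1/(2*(1-m))"
  define e where "e = p*q - p + 1"
  define c1 where "c1 = min (5/16) (3*k/8)"
  define Asub where "Asub = max (max 1 (3*(q-1))) (c1 powr (1/(e-1)))"
  have q1: "q - 1 = (m*N - N + 2)/N" unfolding q_def qexp_def using N0 by (simp add: field_simps)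
  have q1p: "q - 1 > 0" unfolding q1 using D0 N0 by simp
  have B0p: "B > 0" unfolding B_def B0_def using m0 m1 D0 by (simp add: divide_pos_pos)
  have p0: "p < 0" unfolding p_def using m1 by simp
  have k0: "k > 0" unfolding k_def using q1p by simp
  have c10: "c1 > 0" unfolding c1_def using k0 by simp
  have em1: "e - 1 = p*(q-1)" unfolding e_def by (simp add: algebra_simps)
  have em1n: "e - 1 < 0" unfolding em1 using p0 q1p by (simp add: mult_neg_pos)
  have Asub1: "Asub \<ge> 1" unfolding Asub_def by simp
  have Upq: "U powr (p*q) = U powr (p-1) * U powr e" if "U > 0" for U :: real
  proof -
    have "U powr (p*q) = U powr ((p-1) + e)" unfolding e_def by (simp add: algebra_simps)
    then show ?thesis by (simp add: powr_add)
  qed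
  show ?thesis
  proof (intro exI[of _ Asub] conjI)
    show "Asub > 0" using Asub1 by simp
  next
    show "(N - 1) / N \<le> m \<longrightarrow>
        (\<forall>A\<ge>Asub. \<forall>s>0. \<forall>y::'a.
           (let w = (\<lambda>(r::real) (x::'a). sigmaA m N A x) in dt w s y - Lop m w s y \<le> 0))"
    proof (intro impI allI)
      fix A s :: real and y :: 'a
      assume hm: "(N - 1) / N \<le> m" and hA: "A \<ge> Asub" and hs: "s > 0"
      have A1: "A \<ge> 1" using hA Asub1 by simp
      have A0: "A > 0" using A1 by simp
      define U where "U = A + B*(norm y)\<^sup>2"
      define a where "a = U powr (p-1)"
      have UA: "U \<ge> A" unfolding U_def using B0p by simp
      have U0: "U > 0" using UA A0 by simp
      have a0: "a > 0" unfolding a_def using U0 by simp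
      have L: "Lop m (\<lambda>r x. sigmaA m N A x) s y = a*(A*(k*(1/s))) - U powr (p*q)*(1/s)"
        using LOPeval[of m A "\<lambda>r. 1" s y, folded N_def] m0 m1 D0 A0 hs
        by (simp add: U_def a_def B_def p_def q_def k_def)
      have dt0: "dt (\<lambda>r x. sigmaA m N A x) s y = 0"
        unfolding dt_def by (rule DERIV_imp_deriv) (rule DERIV_const)
      have e0: "e \<le> 0"
      proof -
        have "q + m - 2 \<ge> 0"
        proof -
          have "N - 1 \<le> m*N" using hm N0 by (simp add: divide_le_eq)
          then show ?thesis unfolding q_def qexp_def using N0 by (simp add: field_simps)
        qed
        moreover have "e = p*(q + m - 2)"
        proof -
          have pm1: "p*(m-1) = 1" unfolding p_def using m1 by simp
          have "e = p*q - p + p*(m-1)" unfolding e_def pm1 by simp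
          then show ?thesis by (simp add: algebra_simps)
        qed
        ultimately show ?thesis using p0 by (simp add: mult_nonpos_nonneg)
      qed
      have "U powr e \<le> U powr 0" using e0 UA A1 by (intro powr_mono) auto
      then have Ue: "U powr e \<le> 1" using U0 by simp
      have kA: "k*A \<ge> 1"
      proof -
        have "A \<ge> q - 1" using hA q1p unfolding Asub_def by simp
        then show ?thesis unfolding k_def using q1p by (simp add: field_simps)
      qed
      have "U powr (p*q) \<le> a*(k*A)"
      proof -
        have "U powr (p*q) = a * U powr e" using Upq[OF U0] a_def by simp
        also have "\<dots> \<le> a * 1" using Ue a0 by (intro mult_left_mono) auto
        also have "\<dots> \<le> a*(k*A)" using kA a0 by (intro mult_left_mono) auto
        finally show ?thesis .
      qed
      then have "U powr (p*q)*(1/s) \<le> a*(A*(k*(1/s)))"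
        using hs by (simp add: field_simps)
      then show "let w = (\<lambda>(r::real) (x::'a). sigmaA m N A x) in dt w s y - Lop m w s y \<le> 0"
        unfolding Let_def dt0 L by simp
    qed
  next
    show "m < (N - 1) / N \<longrightarrow>
        (\<forall>A\<ge>Asub. \<forall>s. \<forall>y::'a.
           (let q = qexp m N; \<gamma> = 1 / (2 * (1 - m));
                s0 = max (4 * q / (1 - m)) (2 powr (m + 2) * q / (q - 1));
                w = (\<lambda>(r::real) (x::'a). sigmaA m N A x * (1 - \<gamma> / r))
            in s0 < s \<longrightarrow> dt w s y - Lop m w s y \<le> 0))"
    proof (intro impI allI)
      fix A s :: real and y :: 'a
      assume hm: "m < (N - 1) / N" and hA: "A \<ge> Asub"
      show "let q = qexp m N; \<gamma> = 1 / (2 * (1 - m));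
                s0 = max (4 * q / (1 - m)) (2 powr (m + 2) * q / (q - 1));
                w = (\<lambda>(r::real) (x::'a). sigmaA m N A x * (1 - \<gamma> / r))
            in s0 < s \<longrightarrow> dt w s y - Lop m w s y \<le> 0"
        unfolding Let_def q_def[symmetric] g_def[symmetric]
      proof (intro impI)
        assume "max (4 * q / (1 - m)) (2 powr (m + 2) * q / (q - 1)) < s"
        then have hs4: "4*q/(1-m) < s" by simp
        have qp: "q > 1" using q1p by simp
        have s0: "s > 0" using hs4 qp m1 by (smt (verit) divide_pos_pos)
        have A1: "A \<ge> 1" using hA Asub1 by simp
        have A0: "A > 0" using A1 by simp
        define t where "t = 1/s"
        define f where "f = 1 - g/s"
        define U where "U = A + B*(norm y)\<^sup>2"
        define a where "a = U powr (p-1)"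
        have t0: "t > 0" unfolding t_def using s0 by simp
        have g0: "g \<ge> 1/2" unfolding g_def using m0 m1 by (simp add: field_simps)
        have "4*q < (1-m) * s" using hs4 m1 by (simp add: divide_less_eq mult.commute)
        then have gtq: "g*t*q \<le> 1/8" unfolding g_def t_def using m1 s0 by (simp add: field_simps)
        have gt0: "g*t > 0" using g0 t0 by simp
        have gt1: "g*t < 1"
        proof -
          have "g*t*1 \<le> g*t*q" using gt0 qp by (intro mult_left_mono) auto
          then show ?thesis using gtq by simp
        qed
        have ff: "f = 1 - g*t" unfolding f_def t_def by simp
        have f0: "f > 0" "f \<le> 1" using ff gt1 gt0 by auto
        have hfac: "(1-m)*(1-f) = t/2" unfolding ff g_def using m1 by (simp add: field_simps)
        have fmb: "f powr m - f \<le> (1-m)*(1-f)" "f powr m - f \<ge> f*((1-m)*(1-f))"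
          using fm_bounds[OF f0 m0 m1] by auto
        have UA: "U \<ge> A" unfolding U_def using B0p by simp
        have U0: "U > 0" using UA A0 by simp
        have a0: "a > 0" unfolding a_def using U0 by simp
        have Ue: "U powr e \<le> c1*U"
        proof -
          have "U powr (e - 1 + 1) = U powr (e-1) * U powr 1" by (rule powr_add)
          then have "U powr e = U powr (e-1) * U" using U0 by simp
          moreover have "U powr (e-1) \<le> A powr (e-1)" using em1n A0 UA by (intro powr_mono2') auto
          moreover have "A powr (e-1) \<le> (c1 powr (1/(e-1))) powr (e-1)"
            using em1n c10 hA unfolding Asub_def by (intro powr_mono2') auto
          moreover have "(c1 powr (1/(e-1))) powr (e-1) = c1"
            using em1n c10 by (simp add: powr_powr)
          ultimately show ?thesis using U0 by (smt (verit) mult_right_mono)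
        qed
        have fq: "0 \<le> f powr q" "f powr q \<le> 1" using f0 qp by (auto intro: powr_le1)
        have L: "Lop m (\<lambda>r x. sigmaA m N A x * (1 - g/r)) s y
           = a*(B*(norm y)\<^sup>2*(2*g*(f powr m - f)) + A*(k*f*t - k*(f powr m - f))) - a*U powr e*f powr q*t"
        proof -
          have Fs: "(\<lambda>r. 1 - g/r) s > 0" using f0 unfolding f_def by simp
          note L0 = LOPeval[of m A "\<lambda>r. 1 - g/r" s y, folded N_def, OF m0 m1 D0 A0 Fs]
          have sne: "s \<noteq> 0" using s0 by simp
          note L1 = L0[OF sne, unfolded f_def[symmetric] B_def[symmetric] p_def[symmetric] q_def[symmetric]]
          note L2 = L1[unfolded k_def[symmetric] g_def[symmetric] U_def[symmetric]]
          note L3 = L2[unfolded a_def[symmetric] Upq[OF U0] t_def[symmetric]]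
          show ?thesis using L3 by (simp only: mult.assoc)
        qed
        have dtv: "dt (\<lambda>r x. sigmaA m N A x * (1 - g/r)) s y = a*U*g*t^2"
        proof -
          have "sigmaA m N A y = a*U"
          proof -
            have "U powr (p-1+1) = U powr (p-1) * U powr 1" by (rule powr_add)
            then show ?thesis unfolding a_def using U0 by (simp add: sigmaA_def U_def B_def p_def)
          qed
          then show ?thesis unfolding dt_def using dt_eval[of s "sigmaA m N A y" g] s0
            by (simp add: t_def power2_eq_square field_simps)
        qed
        show "dt (\<lambda>r x. sigmaA m N A x * (1 - g/r)) s y - Lop m (\<lambda>r x. sigmaA m N A x * (1 - g/r)) s y \<le> 0"
          unfolding dtv L
          by (rule final2[OF a0 t0 g0 qp k_def gtq ff _ _ _ A0 U_def[unfolded B_def[symmetric]] Ue _ fq])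
             (use fmb hfac B0p c1_def in \<open>auto simp: mult.assoc\<close>)
      qed
    qed
  qed
qed

end
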